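(* For any graph $\Gamma$, the dimer complex $X_{\mathcal{D}}(\Gamma)$ is a nonpositively curved cubed complex.
   Context: A graph is a nonempty 1-dimensional CW-complex with no loops and no isolated vertices (multiple edges allowed); $E$ is its edge set. The power group $2^E$ is the group of subsets of $E$ under symmetric difference. An even cycle is a finite set of edges forming an embedded circle with an even number of edges; two edge sets are independent if no edge of one shares a vertex with an edge of the other. $\mathcal{D}=\mathcal{D}(\Gamma)$ is the set of perfect matchings (edge sets meeting every vertex in exactly one edge). For a finite set $T$ of pairwise independent even cycles let $[T]=\bigcup_{t\in T}t$ (the product in $2^E$). The dimer complex $X_{\mathcal{D}}$ is the cubed complex with one $k$-cube for each pair $(A,S)$ where $A\in\mathcal{D}$ and $S$ is a set of $k$ pairwise independent even cycles with $[T]A\in\mathcal{D}$ for all $T\subset S$, the pairs $(A,S)$ and $([T]A,S)$ ($T\subset S$) giving the same cube; the vertices of this cube are the perfect matchings $[T]A$, $T\subset S$, and its faces are the cubes of $(A,S')$, $S'\subset S$ (so $A,B\in\mathcal{D}$ are joined by an edge iff $AB$ is an even cycle). A cubed complex is nonpositively curved if the link of each 0-cell is a simplicial complex and is a flag complex. *)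

theory Defs
  imports Main
begin

text \<open>A graph: vertex set V, edge set E, and for each edge its set of endpoints
  (exactly two distinct endpoints: no loops; multiple edges allowed since several
  edges may have the same endpoints).\<close>

definition is_graph :: "'v set \<Rightarrow> 'e set \<Rightarrow> ('e \<Rightarrow> 'v set) \<Rightarrow> bool" where
  "is_graph V E inc \<longleftrightarrow> E \<noteq> {} \<and> (\<forall>e\<in>E. inc e \<subseteq> V \<and> card (inc e) = 2)
     \<and> (\<forall>v\<in>V. \<exists>e\<in>E. v \<in> inc e)"

definition verts_of :: "('e \<Rightarrow> 'v set) \<Rightarrow> 'e set \<Rightarrow> 'v set" where
  "verts_of inc C = \<Union>(inc ` C)"

definition symdiff :: "'a set \<Rightarrow> 'a set \<Rightarrow> 'a set" where
  "symdiff A B = (A - B) \<union> (B - A)"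

definition perfect_matching :: "'v set \<Rightarrow> 'e set \<Rightarrow> ('e \<Rightarrow> 'v set) \<Rightarrow> 'e set \<Rightarrow> bool" where
  "perfect_matching V E inc M \<longleftrightarrow> M \<subseteq> E \<and> (\<forall>v\<in>V. \<exists>!e. e \<in> M \<and> v \<in> inc e)"

definition dimers :: "'v set \<Rightarrow> 'e set \<Rightarrow> ('e \<Rightarrow> 'v set) \<Rightarrow> 'e set set" where
  "dimers V E inc = {M. perfect_matching V E inc M}"

text \<open>A cycle (finite edge set forming an embedded circle): finite, nonempty,
  every vertex touched has exactly two incident edges of C, and C is connected.\<close>
definition is_cycle :: "'e set \<Rightarrow> ('e \<Rightarrow> 'v set) \<Rightarrow> 'e set \<Rightarrow> bool" where
  "is_cycle E inc C \<longleftrightarrow> finite C \<and> C \<noteq> {} \<and> C \<subseteq> E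
     \<and> (\<forall>v\<in>verts_of inc C. card {e\<in>C. v \<in> inc e} = 2)
     \<and> (\<forall>C'. C' \<subseteq> C \<and> C' \<noteq> {} \<and> C' \<noteq> C \<longrightarrow> verts_of inc C' \<inter> verts_of inc (C - C') \<noteq> {})"

definition even_cycle :: "'e set \<Rightarrow> ('e \<Rightarrow> 'v set) \<Rightarrow> 'e set \<Rightarrow> bool" where
  "even_cycle E inc C \<longleftrightarrow> is_cycle E inc C \<and> even (card C)"

definition independent :: "('e \<Rightarrow> 'v set) \<Rightarrow> 'e set \<Rightarrow> 'e set \<Rightarrow> bool" where
  "independent inc C D \<longleftrightarrow> verts_of inc C \<inter> verts_of inc D = {}"

definition cube_ok :: "'v set \<Rightarrow> 'e set \<Rightarrow> ('e \<Rightarrow> 'v set) \<Rightarrow> 'e set \<Rightarrow> 'e set set \<Rightarrow> bool" where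
  "cube_ok V E inc A S \<longleftrightarrow> A \<in> dimers V E inc \<and> finite S
     \<and> (\<forall>s\<in>S. even_cycle E inc s)
     \<and> (\<forall>s\<in>S. \<forall>t\<in>S. s \<noteq> t \<longrightarrow> independent inc s t)
     \<and> (\<forall>T. T \<subseteq> S \<longrightarrow> symdiff (\<Union>T) A \<in> dimers V E inc)"

text \<open>The cube of (A,S), represented by its vertex set together with S; thus
  (A,S) and ([T]A,S) give the same cube.\<close>
definition cube_of :: "'e set \<Rightarrow> 'e set set \<Rightarrow> 'e set set \<times> 'e set set" where
  "cube_of A S = ({symdiff (\<Union>T) A | T. T \<subseteq> S}, S)"

definition dimer_cubes :: "'v set \<Rightarrow> 'e set \<Rightarrow> ('e \<Rightarrow> 'v set) \<Rightarrow> ('e set set \<times> 'e set set) set" where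
  "dimer_cubes V E inc = {cube_of A S | A S. cube_ok V E inc A S}"

definition cube_dim :: "'e set set \<times> 'e set set \<Rightarrow> nat" where
  "cube_dim Q = card (snd Q)"

definition cube_faces :: "'e set set \<times> 'e set set \<Rightarrow> ('e set set \<times> 'e set set) set" where
  "cube_faces Q = {cube_of B S' | B S'. B \<in> fst Q \<and> S' \<subseteq> snd Q}"

text \<open>The 1-dimensional faces of Q containing the vertex A: the vertices of the
  simplex of the link of A coming from Q.\<close>
definition edges_at :: "'e set \<Rightarrow> 'e set set \<times> 'e set set \<Rightarrow> ('e set set \<times> 'e set set) set" where
  "edges_at A Q = {e \<in> cube_faces Q. cube_dim e = 1 \<and> A \<in> fst e}"

text \<open>Number of corners of Q at the 0-cell A (Q viewed as the cube of (A, snd Q)).\<close>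
definition corners_at :: "'e set \<Rightarrow> 'e set set \<times> 'e set set \<Rightarrow> 'e set set set" where
  "corners_at A Q = {T. T \<subseteq> snd Q \<and> symdiff (\<Union>T) A = A}"

text \<open>Cubes of positive dimension containing A: they give the simplices of lk(A).\<close>
definition link_cubes :: "('e set set \<times> 'e set set) set \<Rightarrow> 'e set \<Rightarrow> ('e set set \<times> 'e set set) set" where
  "link_cubes X A = {Q \<in> X. A \<in> fst Q \<and> cube_dim Q \<ge> 1}"

text \<open>lk(A) is a simplicial complex: each cube containing A meets A in a single
  corner and contributes a simplex with cube_dim Q distinct vertices, distinct
  cubes give distinct vertex sets, and every nonempty subset of the vertex set of
  a simplex is the vertex set of a simplex.\<close>
definition link_simplicial :: "('e set set \<times> 'e set set) set \<Rightarrow> 'e set \<Rightarrow> bool" where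
  "link_simplicial X A \<longleftrightarrow>
     (\<forall>Q\<in>link_cubes X A. card (corners_at A Q) = 1 \<and> card (edges_at A Q) = cube_dim Q)
     \<and> inj_on (edges_at A) (link_cubes X A)
     \<and> (\<forall>Q\<in>link_cubes X A. \<forall>F. F \<subseteq> edges_at A Q \<and> F \<noteq> {} \<longrightarrow>
           (\<exists>Q'\<in>link_cubes X A. edges_at A Q' = F))"

text \<open>lk(A) is flag: every finite nonempty set of link vertices (edges at A) that
  are pairwise joined in the link spans a simplex.\<close>
definition link_flag :: "('e set set \<times> 'e set set) set \<Rightarrow> 'e set \<Rightarrow> bool" where
  "link_flag X A \<longleftrightarrow>
     (\<forall>F. finite F \<and> F \<noteq> {} \<and> F \<subseteq> {e\<in>X. cube_dim e = 1 \<and> A \<in> fst e}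
        \<and> (\<forall>e1\<in>F. \<forall>e2\<in>F. e1 \<noteq> e2 \<longrightarrow> (\<exists>Q\<in>link_cubes X A. edges_at A Q = {e1, e2}))
        \<longrightarrow> (\<exists>Q\<in>link_cubes X A. edges_at A Q = F))"

definition dimer_complex_npc :: "'v set \<Rightarrow> 'e set \<Rightarrow> ('e \<Rightarrow> 'v set) \<Rightarrow> bool" where
  "dimer_complex_npc V E inc \<longleftrightarrow>
     (\<forall>A\<in>dimers V E inc. link_simplicial (dimer_cubes V E inc) A
                          \<and> link_flag (dimer_cubes V E inc) A)"

end

theory Submission
  imports Defs
begin

definition edge1 :: "'e set \<Rightarrow> 'e set \<Rightarrow> 'e set set \<times> 'e set set" where
  "edge1 A s = ({A, symdiff s A}, {s})"

lemma symdiff_invol[simp]: "symdiff s (symdiff s B) = B"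
  by (auto simp: symdiff_def)

lemma symdiff_assoc: "symdiff X (symdiff Y A) = symdiff (symdiff X Y) A"
  by (auto simp: symdiff_def)

lemma symdiff_empty[simp]: "symdiff {} B = B"
  by (auto simp: symdiff_def)

lemma fst_cube_single: "fst (cube_of B {s}) = {B, symdiff s B}"
proof -
  have "{symdiff (\<Union>T) B | T. T \<subseteq> {s}} = {B, symdiff s B}"
  proof
    show "{symdiff (\<Union>T) B | T. T \<subseteq> {s}} \<subseteq> {B, symdiff s B}"
      by (auto simp: subset_singleton_iff)
    show "{B, symdiff s B} \<subseteq> {symdiff (\<Union>T) B | T. T \<subseteq> {s}}"
    proof -
      have "B = symdiff (\<Union>{}) B" by simp
      moreover have "symdiff s B = symdiff (\<Union>{s}) B" by simp
      ultimately show ?thesis by blast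
    qed
  qed
  thus ?thesis by (simp add: cube_of_def)
qed

lemma snd_cube[simp]: "snd (cube_of B S) = S"
  by (simp add: cube_of_def)

lemma A_in_cube: "A \<in> fst (cube_of A S)"
proof -
  have "\<exists>T. A = symdiff (\<Union>T) A \<and> T \<subseteq> S" by (rule exI[of _ "{}"]) simp
  thus ?thesis unfolding cube_of_def by simp
qed

lemma cube_single: "cube_of A {s} = edge1 A s"
  using fst_cube_single[of A s] by (simp add: edge1_def cube_of_def)

lemma inj_edge1: "inj (edge1 A)"
  by (auto simp: inj_def edge1_def)

lemma edges_at_eq:
  assumes "A \<in> fst Q"
  shows "edges_at A Q = edge1 A ` snd Q"
proof
  show "edges_at A Q \<subseteq> edge1 A ` snd Q"
  proof
    fix e assume e: "e \<in> edges_at A Q"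
    then obtain B S' where eq: "e = cube_of B S'" and B: "B \<in> fst Q" and S': "S' \<subseteq> snd Q"
      and c: "card S' = 1" and Ae: "A \<in> fst e"
      by (auto simp: edges_at_def cube_faces_def cube_dim_def cube_of_def)
    from c obtain s where s: "S' = {s}" by (auto simp: card_1_singleton_iff)
    have "A \<in> {B, symdiff s B}" using Ae eq s fst_cube_single by metis
    then have "e = edge1 A s"
    proof
      assume "A = B" thus ?thesis using eq s cube_single by metis
    next
      assume "A \<in> {symdiff s B}"
      then have "B = symdiff s A" by auto
      moreover have "e = edge1 B s" using eq s cube_single by metis
      ultimately show ?thesis by (auto simp: edge1_def)
    qed
    thus "e \<in> edge1 A ` snd Q" using s S' by auto
  qed
next
  show "edge1 A ` snd Q \<subseteq> edges_at A Q"
  proof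
    fix e assume "e \<in> edge1 A ` snd Q"
    then obtain s where s: "s \<in> snd Q" "e = edge1 A s" by auto
    have "e = cube_of A {s}" using s cube_single by metis
    moreover have "cube_of A {s} \<in> cube_faces Q" using assms s by (auto simp: cube_faces_def)
    ultimately show "e \<in> edges_at A Q"
      by (auto simp: edges_at_def cube_dim_def fst_cube_single snd_cube)
  qed
qed

lemma cycle_edges_disjoint:
  assumes g: "is_graph V E inc" and ok: "cube_ok V E inc B S"
    and st: "s \<in> S" "t \<in> S" "s \<noteq> t"
  shows "s \<inter> t = {}"
proof (rule ccontr)
  assume "s \<inter> t \<noteq> {}"
  then obtain e where e: "e \<in> s" "e \<in> t" by auto
  have ind: "verts_of inc s \<inter> verts_of inc t = {}"
    using ok st by (auto simp: cube_ok_def independent_def)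
  have "inc e \<subseteq> verts_of inc s" "inc e \<subseteq> verts_of inc t" using e by (auto simp: verts_of_def)
  then have "inc e = {}" using ind by blast
  moreover have "e \<in> E" using ok st e by (auto simp: cube_ok_def even_cycle_def is_cycle_def)
  moreover have "card (inc e) = 2" using g \<open>e \<in> E\<close> unfolding is_graph_def by blast
  ultimately show False by simp
qed

lemma union_symdiff:
  assumes "\<forall>s\<in>S. \<forall>t\<in>S. s \<noteq> t \<longrightarrow> s \<inter> t = {}" "T1 \<subseteq> S" "T2 \<subseteq> S"
  shows "symdiff (\<Union>T1) (\<Union>T2) = \<Union>(symdiff T1 T2)"
proof (rule set_eqI)
  fix x
  have D: "False" if "s \<in> S" "t \<in> S" "s \<noteq> t" "x \<in> s" "x \<in> t" for s t
    using assms(1) that by blast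
  show "x \<in> symdiff (\<Union>T1) (\<Union>T2) \<longleftrightarrow> x \<in> \<Union>(symdiff T1 T2)"
  proof
    assume "x \<in> symdiff (\<Union>T1) (\<Union>T2)"
    thus "x \<in> \<Union>(symdiff T1 T2)" unfolding symdiff_def by auto
  next
    assume "x \<in> \<Union>(symdiff T1 T2)"
    then obtain s where s: "x \<in> s" "s \<in> T1 - T2 \<or> s \<in> T2 - T1" unfolding symdiff_def by auto
    thus "x \<in> symdiff (\<Union>T1) (\<Union>T2)"
      unfolding symdiff_def using D assms(2,3) by blast
  qed
qed

lemma recenter:
  assumes g: "is_graph V E inc" and ok: "cube_ok V E inc B S"
    and A: "A \<in> fst (cube_of B S)"
  shows "cube_ok V E inc A S \<and> cube_of A S = cube_of B S"
proof -
  obtain T0 where T0: "T0 \<subseteq> S" "A = symdiff (\<Union>T0) B"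
    using A by (auto simp: cube_of_def)
  have disj: "\<forall>s\<in>S. \<forall>t\<in>S. s \<noteq> t \<longrightarrow> s \<inter> t = {}"
    using cycle_edges_disjoint[OF g ok] by blast
  have key: "symdiff (\<Union>T) A = symdiff (\<Union>(symdiff T T0)) B" if "T \<subseteq> S" for T
    using T0 union_symdiff[OF disj that T0(1)] symdiff_assoc by metis
  have sub: "symdiff T T0 \<subseteq> S" if "T \<subseteq> S" for T
    using that T0 by (auto simp: symdiff_def)
  have inv: "symdiff (symdiff T T0) T0 = T" for T
    by (auto simp: symdiff_def)
  have dim: "symdiff (\<Union>T) A \<in> dimers V E inc" if "T \<subseteq> S" for T
    using key[OF that] sub[OF that] ok by (auto simp: cube_ok_def)
  have "A \<in> dimers V E inc" using dim[of "{}"] by simp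
  then have ok2: "cube_ok V E inc A S" using ok dim by (auto simp: cube_ok_def)
  have "{symdiff (\<Union>T) A | T. T \<subseteq> S} = {symdiff (\<Union>T) B | T. T \<subseteq> S}"
  proof
    show "{symdiff (\<Union>T) A | T. T \<subseteq> S} \<subseteq> {symdiff (\<Union>T) B | T. T \<subseteq> S}"
      using key sub by blast
    show "{symdiff (\<Union>T) B | T. T \<subseteq> S} \<subseteq> {symdiff (\<Union>T) A | T. T \<subseteq> S}"
    proof
      fix x assume "x \<in> {symdiff (\<Union>T) B | T. T \<subseteq> S}"
      then obtain T where T: "T \<subseteq> S" "x = symdiff (\<Union>T) B" by auto
      have "x = symdiff (\<Union>(symdiff T T0)) A"
        using key[OF sub[OF T(1)]] inv T(2) by simp
      thus "x \<in> {symdiff (\<Union>T) A | T. T \<subseteq> S}" using sub[OF T(1)] by blast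
    qed
  qed
  thus ?thesis using ok2 by (simp add: cube_of_def)
qed

lemma recenter_X:
  assumes g: "is_graph V E inc" and Q: "Q \<in> dimer_cubes V E inc" and A: "A \<in> fst Q"
  shows "cube_ok V E inc A (snd Q) \<and> Q = cube_of A (snd Q)"
proof -
  obtain B S where Q: "Q = cube_of B S" "cube_ok V E inc B S"
    using Q by (auto simp: dimer_cubes_def)
  have "snd Q = S" using Q by (simp add: cube_of_def)
  thus ?thesis using recenter[OF g Q(2)] A Q by auto
qed

lemma matching_lemma:
  assumes A: "A \<in> dimers V E inc"
    and cyc: "\<forall>s\<in>T. s \<subseteq> E \<and> symdiff s A \<in> dimers V E inc"
    and ind: "\<forall>s\<in>T. \<forall>t\<in>T. s \<noteq> t \<longrightarrow> independent inc s t"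
  shows "symdiff (\<Union>T) A \<in> dimers V E inc"
  unfolding dimers_def perfect_matching_def mem_Collect_eq
proof (intro conjI ballI)
  show "symdiff (\<Union>T) A \<subseteq> E" using A cyc
    by (auto simp: symdiff_def dimers_def perfect_matching_def)
next
  fix v assume v: "v \<in> V"
  show "\<exists>!e. e \<in> symdiff (\<Union>T) A \<and> v \<in> inc e"
  proof (cases "\<exists>s\<in>T. v \<in> verts_of inc s")
    case True
    then obtain s where s: "s \<in> T" "v \<in> verts_of inc s" by auto
    have eq: "(e \<in> symdiff (\<Union>T) A \<and> v \<in> inc e) = (e \<in> symdiff s A \<and> v \<in> inc e)" for e
    proof -
      have "(e \<in> \<Union>T \<and> v \<in> inc e) = (e \<in> s \<and> v \<in> inc e)"
      proof
        assume h: "e \<in> \<Union>T \<and> v \<in> inc e"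
        then obtain t where t: "t \<in> T" "e \<in> t" by auto
        have "v \<in> verts_of inc t" using t h by (auto simp: verts_of_def)
        then have "t = s" using ind s t by (auto simp: independent_def)
        thus "e \<in> s \<and> v \<in> inc e" using t h by auto
      qed (use s in auto)
      thus ?thesis by (auto simp: symdiff_def)
    qed
    have "\<exists>!e. e \<in> symdiff s A \<and> v \<in> inc e"
      using cyc s v by (auto simp: dimers_def perfect_matching_def)
    thus ?thesis using eq by simp
  next
    case False
    have eq: "(e \<in> symdiff (\<Union>T) A \<and> v \<in> inc e) = (e \<in> A \<and> v \<in> inc e)" for e
      using False by (auto simp: symdiff_def verts_of_def)
    have "\<exists>!e. e \<in> A \<and> v \<in> inc e"
      using A v by (auto simp: dimers_def perfect_matching_def)
    thus ?thesis using eq by simp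
  qed
qed

lemma cube_ok_subset:
  assumes "cube_ok V E inc A S" "S' \<subseteq> S"
  shows "cube_ok V E inc A S'"
proof -
  have a: "A \<in> dimers V E inc" "finite S" "\<forall>s\<in>S. even_cycle E inc s"
    "\<forall>s\<in>S. \<forall>t\<in>S. s \<noteq> t \<longrightarrow> independent inc s t"
    "\<forall>T. T \<subseteq> S \<longrightarrow> symdiff (\<Union>T) A \<in> dimers V E inc"
    using assms(1) unfolding cube_ok_def by blast+
  have "finite S'" using a(2) assms(2) by (rule finite_subset[rotated])
  moreover have "\<forall>s\<in>S'. even_cycle E inc s" using a(3) assms(2) by blast
  moreover have "\<forall>s\<in>S'. \<forall>t\<in>S'. s \<noteq> t \<longrightarrow> independent inc s t" using a(4) assms(2) by blast
  moreover have "\<forall>T. T \<subseteq> S' \<longrightarrow> symdiff (\<Union>T) A \<in> dimers V E inc"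
  proof (intro allI impI)
    fix T assume "T \<subseteq> S'"
    then have "T \<subseteq> S" using assms(2) by blast
    thus "symdiff (\<Union>T) A \<in> dimers V E inc" using a(5) by blast
  qed
  ultimately show ?thesis using a(1) unfolding cube_ok_def by blast
qed

lemma cube_ok_single:
  assumes "cube_ok V E inc A {s}"
  shows "even_cycle E inc s" "symdiff s A \<in> dimers V E inc"
proof -
  show "even_cycle E inc s" using assms by (auto simp: cube_ok_def)
  have "symdiff (\<Union>{s}) A \<in> dimers V E inc" using assms unfolding cube_ok_def by blast
  thus "symdiff s A \<in> dimers V E inc" by simp
qed

theorem theorem6p3:
  fixes V :: "'v set" and E :: "'e set" and inc :: "'e \<Rightarrow> 'v set"
  assumes "is_graph V E inc"
  shows "dimer_complex_npc V E inc"
  unfolding dimer_complex_npc_def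
proof (intro ballI conjI)
  fix A assume A: "A \<in> dimers V E inc"
  define X where "X = dimer_cubes V E inc"
  have LC: "cube_ok V E inc A (snd Q) \<and> Q = cube_of A (snd Q) \<and> edges_at A Q = edge1 A ` snd Q
      \<and> finite (snd Q) \<and> snd Q \<noteq> {}" if "Q \<in> link_cubes X A" for Q
  proof -
    have Q: "Q \<in> X" "A \<in> fst Q" "card (snd Q) \<ge> 1" using that by (auto simp: link_cubes_def cube_dim_def)
    have r: "cube_ok V E inc A (snd Q) \<and> Q = cube_of A (snd Q)"
      using recenter_X[OF assms] Q X_def by blast
    moreover have "finite (snd Q) \<and> snd Q \<noteq> {}" using Q(3)
      by (metis card.empty card.infinite not_one_le_zero)
    ultimately show ?thesis using edges_at_eq[OF Q(2)] by blast
  qed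
  have inj: "inj (edge1 A)" by (rule inj_edge1)
  have memX: "cube_of A S \<in> link_cubes X A" if "cube_ok V E inc A S" "finite S" "S \<noteq> {}" for S
  proof -
    have "card S \<ge> 1" using that by (simp add: Suc_le_eq card_gt_0_iff)
    thus ?thesis using that A_in_cube unfolding link_cubes_def X_def dimer_cubes_def cube_dim_def
      by auto
  qed
  show "link_simplicial (dimer_cubes V E inc) A"
    unfolding link_simplicial_def X_def[symmetric]
  proof (intro conjI ballI allI impI)
    fix Q assume Q: "Q \<in> link_cubes X A"
    note L = LC[OF Q]
    have "corners_at A Q = {{}}"
    proof -
      have "T = {}" if "T \<subseteq> snd Q" "symdiff (\<Union>T) A = A" for T
      proof -
        have "\<Union>T = {}" using that(2) by (auto simp: symdiff_def set_eq_iff)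
        moreover have "\<forall>s\<in>T. s \<noteq> {}" using that(1) L
          by (auto simp: cube_ok_def even_cycle_def is_cycle_def)
        ultimately show ?thesis by auto
      qed
      thus ?thesis unfolding corners_at_def by auto
    qed
    thus "card (corners_at A Q) = 1" by simp
    show "card (edges_at A Q) = cube_dim Q"
      using L card_image[of "edge1 A" "snd Q"] inj by (simp add: cube_dim_def inj_on_def inj_def)
  next
    show "inj_on (edges_at A) (link_cubes X A)"
    proof (rule inj_onI)
      fix Q1 Q2 assume Q: "Q1 \<in> link_cubes X A" "Q2 \<in> link_cubes X A"
        and eq: "edges_at A Q1 = edges_at A Q2"
      have "snd Q1 = snd Q2" using eq LC[OF Q(1)] LC[OF Q(2)] inj
        by (metis inj_image_eq_iff)
      thus "Q1 = Q2" using LC[OF Q(1)] LC[OF Q(2)] by metis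
    qed
  next
    fix Q F assume Q: "Q \<in> link_cubes X A" and F: "F \<subseteq> edges_at A Q \<and> F \<noteq> {}"
    note L = LC[OF Q]
    define S' where "S' = {s \<in> snd Q. edge1 A s \<in> F}"
    have FS: "F = edge1 A ` S'" using F L unfolding S'_def by auto
    have ok: "cube_ok V E inc A S'" using cube_ok_subset[of V E inc A "snd Q" S'] L S'_def by auto
    have "finite S'" "S' \<noteq> {}" using L FS F S'_def finite_subset by auto
    then have "cube_of A S' \<in> link_cubes X A" using memX ok by blast
    moreover have "edges_at A (cube_of A S') = F" using edges_at_eq[OF A_in_cube] FS by simp
    ultimately show "\<exists>Q'\<in>link_cubes X A. edges_at A Q' = F" by blast
  qed
  show "link_flag (dimer_cubes V E inc) A"
    unfolding link_flag_def X_def[symmetric]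
  proof (intro allI impI)
    fix F assume F: "finite F \<and> F \<noteq> {} \<and> F \<subseteq> {e \<in> X. cube_dim e = 1 \<and> A \<in> fst e} \<and>
         (\<forall>e1\<in>F. \<forall>e2\<in>F. e1 \<noteq> e2 \<longrightarrow> (\<exists>Q\<in>link_cubes X A. edges_at A Q = {e1, e2}))"
    define S where "S = {s. edge1 A s \<in> F}"
    have each: "\<exists>s. e = edge1 A s \<and> cube_ok V E inc A {s}" if "e \<in> F" for e
    proof -
      have e: "e \<in> X" "card (snd e) = 1" "A \<in> fst e" using that F by (auto simp: cube_dim_def)
      have r: "cube_ok V E inc A (snd e) \<and> e = cube_of A (snd e)"
        using recenter_X[OF assms] e X_def by blast
      obtain s where s: "snd e = {s}" using e(2) by (auto simp: card_1_singleton_iff)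
      have "e = cube_of A {s}" using r s by simp
      also have "\<dots> = edge1 A s" by (rule cube_single)
      finally have "e = edge1 A s" .
      moreover have "cube_ok V E inc A {s}" using r s by simp
      ultimately show ?thesis by blast
    qed
    have FS: "F = edge1 A ` S"
    proof
      show "F \<subseteq> edge1 A ` S"
      proof
        fix e assume e: "e \<in> F"
        then obtain s where "e = edge1 A s" using each by blast
        thus "e \<in> edge1 A ` S" using e S_def by auto
      qed
      show "edge1 A ` S \<subseteq> F" unfolding S_def by auto
    qed
    have injS: "inj_on (edge1 A) S" using inj by (rule inj_on_subset) simp
    have "finite (edge1 A ` S)" using FS F by simp
    then have fin: "finite S" using finite_imageD injS by blast
    have ne: "S \<noteq> {}" using FS F by auto
    have sS: "even_cycle E inc s \<and> symdiff s A \<in> dimers V E inc" if sS0: "s \<in> S" for s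
    proof -
      have "edge1 A s \<in> F" using sS0 S_def by auto
      then obtain s' where "edge1 A s = edge1 A s'" "cube_ok V E inc A {s'}"
        using each by blast
      then have "cube_ok V E inc A {s}" using inj by (metis injD)
      thus ?thesis using cube_ok_single by blast
    qed
    have ind: "independent inc s t" if st: "s \<in> S" "t \<in> S" "s \<noteq> t" for s t
    proof -
      have ne2: "edge1 A s \<noteq> edge1 A t" using st inj by (metis injD)
      have inF: "edge1 A s \<in> F" "edge1 A t \<in> F" using st S_def by auto
      have "\<exists>Q\<in>link_cubes X A. edges_at A Q = {edge1 A s, edge1 A t}"
        using F inF ne2 by blast
      then obtain Q where Q: "Q \<in> link_cubes X A" "edges_at A Q = {edge1 A s, edge1 A t}"
        by blast
      note L = LC[OF Q(1)]
      have "edge1 A ` snd Q = edge1 A ` {s, t}" using L Q(2) by simp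
      then have "snd Q = {s, t}" using inj by (metis inj_image_eq_iff)
      thus ?thesis using L st(3) by (auto simp: cube_ok_def)
    qed
    have ok: "cube_ok V E inc A S"
      unfolding cube_ok_def
    proof (intro conjI allI impI ballI)
      show "A \<in> dimers V E inc" by fact
      show "finite S" by fact
      show "even_cycle E inc s" if "s \<in> S" for s using sS that by blast
      show "independent inc s t" if "s \<in> S" "t \<in> S" "s \<noteq> t" for s t using ind that by blast
      fix T assume T: "T \<subseteq> S"
      show "symdiff (\<Union>T) A \<in> dimers V E inc"
      proof (rule matching_lemma[OF A])
        show "\<forall>s\<in>T. s \<subseteq> E \<and> symdiff s A \<in> dimers V E inc"
        proof
          fix s assume "s \<in> T"
          then have "s \<in> S" using T by auto
          then show "s \<subseteq> E \<and> symdiff s A \<in> dimers V E inc"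
            using sS unfolding even_cycle_def is_cycle_def by blast
        qed
        show "\<forall>s\<in>T. \<forall>t\<in>T. s \<noteq> t \<longrightarrow> independent inc s t" using T ind by blast
      qed
    qed
    have "cube_of A S \<in> link_cubes X A" using memX ok fin ne by blast
    moreover have "edges_at A (cube_of A S) = F" using edges_at_eq[OF A_in_cube] FS by simp
    ultimately show "\<exists>Q\<in>link_cubes X A. edges_at A Q = F" by blast
  qed
qed

end
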